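(* Let $\mathcal{T}=\{0,1\}$, let $P\in\Delta_{\mathcal{T},\mathcal{X},\mathcal{Y}}$ with $P(T=0)>0$ and $P(T=1)>0$, and for $t\in\{0,1\}$ write $\bar t=1-t$. Then: (1) If $\mathcal{X}_0\cap\mathcal{X}_1=\emptyset$, then $T$ is conditionally independent of $Y$ given $X$ under every $Q\in\Delta_P$. (2) If $\mathcal{Y}_0\cap\mathcal{Y}_1=\emptyset$, then $T$ is conditionally independent of $X$ given $Y$ under every $Q\in\Delta_P$. (3) Suppose $\mathcal{X}_0\cap\mathcal{X}_1\neq\emptyset\neq\mathcal{Y}_0\cap\mathcal{Y}_1$. (a) If some $t\in\{0,1\}$ satisfies $\mathcal{X}_t\setminus\mathcal{X}_{\bar t}\ne\emptyset$ and $\mathcal{Y}_t\setminus\mathcal{Y}_{\bar t}\neq\emptyset$, then $\arg\max_{Q\in\Delta_P}H_Q(T\mid X,Y)$ does not intersect the relative interior of $\Delta_P$. (b) If $\mathcal{X}_t\setminus\mathcal{X}_{\bar t}\ne\emptyset$ for some $t$ and there exists $Q^*$ in the relative interior of $\Delta_P$ with $Q^*\in\arg\max_{Q\in\Delta_P}H_Q(T\mid X,Y)$, then under the conditional distribution $Q^*(\cdot\mid Y\in\mathcal{Y}_t)$, $T$ is conditionally independent of $Y$ given $X$. (c) If $\mathcal{Y}_t\setminus\mathcal{Y}_{\bar t}\ne\emptyset$ for some $t$ and there exists $Q^*$ in the relative interior of $\Delta_P$ with $Q^*\in\arg\max_{Q\in\Delta_P}H_Q(T\mid X,Y)$, then under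 the conditional distribution $Q^*(\cdot\mid X\in\mathcal{X}_t)$, $T$ is conditionally independent of $X$ given $Y$.
   Context: $T,X,Y$ are random variables with finite state spaces $\mathcal{T},\mathcal{X},\mathcal{Y}$; $\Delta_{\mathcal{T},\mathcal{X},\mathcal{Y}}$ is the set of all joint distributions on $\mathcal{T}\times\mathcal{X}\times\mathcal{Y}$. For $P\in\Delta_{\mathcal{T},\mathcal{X},\mathcal{Y}}$, $\Delta_P=\{Q\in\Delta_{\mathcal{T},\mathcal{X},\mathcal{Y}}: Q(X=x,T=t)=P(X=x,T=t),\ Q(Y=y,T=t)=P(Y=y,T=t)\ \forall x,y,t\}$. For $t$ with $P(T=t)>0$: $\mathcal{X}_t=\{x: P(X=x\mid T=t)>0\}$, $\mathcal{Y}_t=\{y: P(Y=y\mid T=t)>0\}$. *)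

theory Defs
  imports "HOL-Analysis.Analysis"
begin

text \<open>The state space of T is {0,1}, encoded by bool (False = 0, True = 1).\<close>

type_synonym ('x,'y) jdist = "real ^ (bool \<times> 'x \<times> 'y)"

definition pr :: "('x::finite,'y::finite) jdist \<Rightarrow> bool \<Rightarrow> 'x \<Rightarrow> 'y \<Rightarrow> real" where
  "pr Q t x y = Q $ (t, x, y)"

definition is_dist :: "('x::finite,'y::finite) jdist \<Rightarrow> bool" where
  "is_dist Q \<longleftrightarrow> (\<forall>t x y. pr Q t x y \<ge> 0) \<and> (\<Sum>t\<in>UNIV. \<Sum>x\<in>UNIV. \<Sum>y\<in>UNIV. pr Q t x y) = 1"

definition pT :: "('x::finite,'y::finite) jdist \<Rightarrow> bool \<Rightarrow> real" where
  "pT Q t = (\<Sum>x\<in>UNIV. \<Sum>y\<in>UNIV. pr Q t x y)"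
definition pX :: "('x::finite,'y::finite) jdist \<Rightarrow> 'x \<Rightarrow> real" where
  "pX Q x = (\<Sum>t\<in>UNIV. \<Sum>y\<in>UNIV. pr Q t x y)"
definition pY :: "('x::finite,'y::finite) jdist \<Rightarrow> 'y \<Rightarrow> real" where
  "pY Q y = (\<Sum>t\<in>UNIV. \<Sum>x\<in>UNIV. pr Q t x y)"
definition pTX :: "('x::finite,'y::finite) jdist \<Rightarrow> bool \<Rightarrow> 'x \<Rightarrow> real" where
  "pTX Q t x = (\<Sum>y\<in>UNIV. pr Q t x y)"
definition pTY :: "('x::finite,'y::finite) jdist \<Rightarrow> bool \<Rightarrow> 'y \<Rightarrow> real" where
  "pTY Q t y = (\<Sum>x\<in>UNIV. pr Q t x y)"
definition pXY :: "('x::finite,'y::finite) jdist \<Rightarrow> 'x \<Rightarrow> 'y \<Rightarrow> real" where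
  "pXY Q x y = (\<Sum>t\<in>UNIV. pr Q t x y)"

definition DeltaP :: "('x::finite,'y::finite) jdist \<Rightarrow> ('x,'y) jdist set" where
  "DeltaP P = {Q. is_dist Q \<and> (\<forall>x t. pTX Q t x = pTX P t x) \<and> (\<forall>y t. pTY Q t y = pTY P t y)}"

definition Xsupp :: "('x::finite,'y::finite) jdist \<Rightarrow> bool \<Rightarrow> 'x set" where
  "Xsupp P t = {x. pTX P t x / pT P t > 0}"
definition Ysupp :: "('x::finite,'y::finite) jdist \<Rightarrow> bool \<Rightarrow> 'y set" where
  "Ysupp P t = {y. pTY P t y / pT P t > 0}"

text \<open>Conditional independence (of a possibly unnormalised nonnegative measure, here
 always a probability distribution): T \<perp> Y | X iff Q(t,x,y) Q(x) = Q(t,x) Q(x,y) for all t,x,y,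
 i.e. Q(t,y|x) = Q(t|x) Q(y|x) whenever Q(x) > 0.\<close>
definition indep_TY_given_X :: "('x::finite,'y::finite) jdist \<Rightarrow> bool" where
  "indep_TY_given_X Q \<longleftrightarrow> (\<forall>t x y. pr Q t x y * pX Q x = pTX Q t x * pXY Q x y)"
definition indep_TX_given_Y :: "('x::finite,'y::finite) jdist \<Rightarrow> bool" where
  "indep_TX_given_Y Q \<longleftrightarrow> (\<forall>t x y. pr Q t x y * pY Q y = pTY Q t y * pXY Q x y)"

definition cond_Y :: "('x::finite,'y::finite) jdist \<Rightarrow> 'y set \<Rightarrow> ('x,'y) jdist" where
  "cond_Y Q B = (\<chi> i. case i of (t,x,y) \<Rightarrow> (if y \<in> B then pr Q t x y else 0) / (\<Sum>y'\<in>B. pY Q y'))"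
definition cond_X :: "('x::finite,'y::finite) jdist \<Rightarrow> 'x set \<Rightarrow> ('x,'y) jdist" where
  "cond_X Q A = (\<chi> i. case i of (t,x,y) \<Rightarrow> (if x \<in> A then pr Q t x y else 0) / (\<Sum>x'\<in>A. pX Q x'))"

text \<open>Conditional entropy H_Q(T | X,Y) = - \<Sum> Q(t,x,y) log (Q(t,x,y)/Q(x,y)), with 0 log 0 = 0
 (base 2; the base is irrelevant for the argmax).\<close>
definition condH :: "('x::finite,'y::finite) jdist \<Rightarrow> real" where
  "condH Q = - (\<Sum>t\<in>UNIV. \<Sum>x\<in>UNIV. \<Sum>y\<in>UNIV.
      (if pr Q t x y > 0 then pr Q t x y * log 2 (pr Q t x y / pXY Q x y) else 0))"

definition argmaxH :: "('x::finite,'y::finite) jdist \<Rightarrow> ('x,'y) jdist set" where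
  "argmaxH P = {Q \<in> DeltaP P. \<forall>Q'\<in>DeltaP P. condH Q' \<le> condH Q}"

end

theory Submission imports Defs begin

lemma sum_bool: "(\<Sum>t\<in>UNIV. f t) = f b + f (\<not> b)" for f :: "bool \<Rightarrow> 'a::comm_monoid_add"
  by (cases b) (simp_all add: UNIV_bool add.commute)

lemma pr_add[simp]: "pr (A + B) t x y = pr A t x y + pr B t x y"
  by (simp add: pr_def)
lemma pr_scale[simp]: "pr (c *\<^sub>R A) t x y = c * pr A t x y"
  by (simp add: pr_def)
lemma pr_chi[simp]: "pr (\<chi> i. f i) t x y = f (t, x, y)"
  by (simp add: pr_def)

lemma pTX_add[simp]: "pTX (A + B) t x = pTX A t x + pTX B t x"
  by (simp add: pTX_def sum.distrib)
lemma pTX_scale[simp]: "pTX (c *\<^sub>R A) t x = c * pTX A t x"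
  by (simp add: pTX_def sum_distrib_left)
lemma pTY_add[simp]: "pTY (A + B) t x = pTY A t x + pTY B t x"
  by (simp add: pTY_def sum.distrib)
lemma pTY_scale[simp]: "pTY (c *\<^sub>R A) t x = c * pTY A t x"
  by (simp add: pTY_def sum_distrib_left)

lemma is_dist_alt: "is_dist Q \<longleftrightarrow> (\<forall>t x y. pr Q t x y \<ge> 0) \<and> (\<Sum>t\<in>UNIV. \<Sum>x\<in>UNIV. pTX Q t x) = 1"
  by (simp add: is_dist_def pTX_def)

lemma pTX_nonneg: "is_dist Q \<Longrightarrow> pTX Q t x \<ge> 0"
  by (auto simp: is_dist_def pTX_def intro: sum_nonneg)
lemma pTY_nonneg: "is_dist Q \<Longrightarrow> pTY Q t x \<ge> 0"
  by (auto simp: is_dist_def pTY_def intro: sum_nonneg)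

lemma sum_pTX: "(\<Sum>x\<in>UNIV. pTX Q t x) = pT Q t"
  by (simp add: pTX_def pT_def)
lemma sum_pTY: "(\<Sum>y\<in>UNIV. pTY Q t y) = pT Q t"
  unfolding pTY_def pT_def by (rule sum.swap)

lemma convex_DeltaP: "convex (DeltaP P)"
  unfolding convex_def
proof (intro ballI allI impI)
  fix A B and u v :: real
  assume A: "A \<in> DeltaP P" and B: "B \<in> DeltaP P" and uv: "0 \<le> u" "0 \<le> v" "u + v = 1"
  have dA: "is_dist A" and dB: "is_dist B" using A B by (auto simp: DeltaP_def)
  show "u *\<^sub>R A + v *\<^sub>R B \<in> DeltaP P"
    unfolding DeltaP_def is_dist_alt
  proof (intro CollectI conjI allI)
    fix t x y show "0 \<le> pr (u *\<^sub>R A + v *\<^sub>R B) t x y"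
      using dA dB uv by (simp add: is_dist_def)
  next
    have "(\<Sum>t\<in>UNIV. \<Sum>x\<in>UNIV. pTX (u *\<^sub>R A + v *\<^sub>R B) t x)
       = u * (\<Sum>t\<in>UNIV. \<Sum>x\<in>UNIV. pTX A t x) + v * (\<Sum>t\<in>UNIV. \<Sum>x\<in>UNIV. pTX B t x)"
      by (simp add: sum.distrib sum_distrib_left)
    then show "(\<Sum>t\<in>UNIV. \<Sum>x\<in>UNIV. pTX (u *\<^sub>R A + v *\<^sub>R B) t x) = 1"
      using dA dB uv by (simp add: is_dist_alt)
  next
    fix x t show "pTX (u *\<^sub>R A + v *\<^sub>R B) t x = pTX P t x"
      using A B uv by (simp add: DeltaP_def) (metis distrib_right mult_1)
  next
    fix x t show "pTY (u *\<^sub>R A + v *\<^sub>R B) t x = pTY P t x"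
      using A B uv by (simp add: DeltaP_def) (metis distrib_right mult_1)
  qed
qed

lemma zero_cell:
  assumes "Q \<in> DeltaP P" "pTX P t x = 0"
  shows "pr Q t x y = 0"
proof -
  have d: "is_dist Q" and m: "pTX Q t x = 0" using assms by (auto simp: DeltaP_def)
  have "(\<Sum>y\<in>UNIV. pr Q t x y) = 0" using m by (simp add: pTX_def)
  moreover have "\<forall>y\<in>UNIV. pr Q t x y \<ge> 0" using d by (simp add: is_dist_def)
  ultimately show ?thesis by (simp add: sum_nonneg_eq_0_iff)
qed

lemma zero_cell_Y:
  assumes "Q \<in> DeltaP P" "pTY P t y = 0"
  shows "pr Q t x y = 0"
proof -
  have d: "is_dist Q" and m: "pTY Q t y = 0" using assms by (auto simp: DeltaP_def)
  have "(\<Sum>x\<in>UNIV. pr Q t x y) = 0" using m by (simp add: pTY_def)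
  moreover have "\<forall>x\<in>UNIV. pr Q t x y \<ge> 0" using d by (simp add: is_dist_def)
  ultimately show ?thesis by (simp add: sum_nonneg_eq_0_iff)
qed

lemma notX_zero:
  assumes "is_dist P" "pT P t > 0" "x \<notin> Xsupp P t"
  shows "pTX P t x = 0"
  using assms pTX_nonneg[of P t x] by (auto simp: Xsupp_def zero_less_divide_iff)
lemma notY_zero:
  assumes "is_dist P" "pT P t > 0" "y \<notin> Ysupp P t"
  shows "pTY P t y = 0"
  using assms pTY_nonneg[of P t y] by (auto simp: Ysupp_def zero_less_divide_iff)

lemma inX_pos: "pT P t > 0 \<Longrightarrow> x \<in> Xsupp P t \<Longrightarrow> pTX P t x > 0"
  by (auto simp: Xsupp_def zero_less_divide_iff)
lemma inY_pos: "pT P t > 0 \<Longrightarrow> y \<in> Ysupp P t \<Longrightarrow> pTY P t y > 0"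
  by (auto simp: Ysupp_def zero_less_divide_iff)

definition prodc :: "('x::finite,'y::finite) jdist \<Rightarrow> ('x,'y) jdist" where
  "prodc P = (\<chi> i. case i of (t,x,y) \<Rightarrow> pTX P t x * pTY P t y / pT P t)"

lemma prodc_in:
  assumes "is_dist P" "pT P False > 0" "pT P True > 0"
  shows "prodc P \<in> DeltaP P"
proof -
  have pt: "pT P t > 0" for t using assms by (cases t) auto
  have X: "pTX (prodc P) t x = pTX P t x" for t x
  proof -
    have "pTX (prodc P) t x = pTX P t x * (\<Sum>y\<in>UNIV. pTY P t y) / pT P t"
      by (simp add: pTX_def prodc_def sum_distrib_left sum_divide_distrib)
    also have "\<dots> = pTX P t x" using pt[of t] by (simp add: sum_pTY)
    finally show ?thesis .
  qed
  have Y: "pTY (prodc P) t y = pTY P t y" for t y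
  proof -
    have "pTY (prodc P) t y = (\<Sum>x\<in>UNIV. pTX P t x) * pTY P t y / pT P t"
      by (simp add: pTY_def prodc_def sum_distrib_right sum_divide_distrib)
    also have "\<dots> = pTY P t y" using pt[of t] by (simp add: sum_pTX)
    finally show ?thesis .
  qed
  have "is_dist (prodc P)"
    unfolding is_dist_alt X
  proof
    show "\<forall>t x y. 0 \<le> pr (prodc P) t x y"
      using pt by (auto simp: prodc_def intro!: divide_nonneg_pos mult_nonneg_nonneg pTX_nonneg pTY_nonneg assms(1))
    show "(\<Sum>t\<in>UNIV. \<Sum>x\<in>UNIV. pTX P t x) = 1"
      using assms(1) by (simp add: is_dist_alt)
  qed
  then show ?thesis using X Y by (simp add: DeltaP_def)
qed

lemma relint_pos:
  assumes "is_dist P" "pT P False > 0" "pT P True > 0"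
    and "Q \<in> rel_interior (DeltaP P)" "x \<in> Xsupp P t" "y \<in> Ysupp P t"
  shows "pr Q t x y > 0"
proof -
  have pt: "pT P t > 0" for t using assms by (cases t) auto
  have R: "prodc P \<in> DeltaP P" using prodc_in assms by blast
  have Q: "Q \<in> DeltaP P" using assms(4) rel_interior_subset by blast
  have r: "pr (prodc P) t x y > 0"
    using inX_pos[OF pt assms(5)] inY_pos[OF pt assms(6)] pt[of t] by (simp add: prodc_def)
  obtain e where e: "e > 1" "(1 - e) *\<^sub>R prodc P + e *\<^sub>R Q \<in> DeltaP P"
    using convex_rel_interior_iff[OF convex_DeltaP, of P Q] assms(4) R by blast
  then have "pr ((1 - e) *\<^sub>R prodc P + e *\<^sub>R Q) t x y \<ge> 0"
    by (simp add: DeltaP_def is_dist_def)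
  then have "(1 - e) * pr (prodc P) t x y + e * pr Q t x y \<ge> 0" by simp
  moreover have "(1 - e) * pr (prodc P) t x y < 0" using e(1) r by (simp add: mult_neg_pos)
  ultimately have "e * pr Q t x y > 0" by linarith
  then show ?thesis using e(1) by (simp add: zero_less_mult_iff)
qed

definition ent :: "real \<Rightarrow> real \<Rightarrow> real" where
  "ent a c = (if a > 0 then a * log 2 (a / c) else 0)"
definition G :: "real \<Rightarrow> real \<Rightarrow> real" where
  "G u v = ent u (u + v) + ent v (u + v)"

lemma condH_alt:
  "condH Q = - (\<Sum>a\<in>UNIV. \<Sum>b\<in>UNIV. G (pr Q t a b) (pr Q (\<not> t) a b))"
proof -
  have p: "pXY Q x y = pr Q t x y + pr Q (\<not> t) x y" for x y
    by (simp add: pXY_def sum_bool[where b=t])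
  show ?thesis
    unfolding condH_def G_def ent_def p
    by (simp add: sum_bool[where b=t] sum.distrib)
qed

lemma G_deriv:
  assumes "c = 0 \<or> q > 0" "s \<ge> 0"
  shows "((\<lambda>e. G (q + e * c) s) has_real_derivative c * log 2 (q / (q + s))) (at 0)"
proof (cases "c = 0")
  case True
  then show ?thesis by simp
next
  case False
  then have q: "q > 0" using assms by auto
  define d where "d = q / \<bar>c\<bar>"
  have d: "d > 0" using q False by (simp add: d_def)
  have pos: "q + e * c > 0" if "dist e 0 < d" for e
  proof -
    have "\<bar>e\<bar> * \<bar>c\<bar> < q" using that False by (simp add: d_def pos_less_divide_eq)
    then have "\<bar>e * c\<bar> < q" by (simp add: abs_mult)
    then show ?thesis by linarith
  qed
  show ?thesis
  proof (cases "s = 0")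
    case True
    have "((\<lambda>e. 0) has_real_derivative c * log 2 (q / (q + s))) (at 0)"
      using True q by simp
    then show ?thesis
      by (rule has_field_derivative_transform_within[OF _ d])
         (use pos True in \<open>auto simp: G_def ent_def\<close>)
  next
    case False
    then have s: "s > 0" using assms by simp
    define F where "F e = (q + e * c) * ((ln (q + e * c) - ln (q + e * c + s)) / ln 2)
        + s * ((ln s - ln (q + e * c + s)) / ln 2)" for e
    have "(F has_real_derivative c * log 2 (q / (q + s))) (at 0)"
    proof -
      have "(F has_real_derivative
          (c * (ln q - ln (q + s)) + (c / q - c / (q + s)) * q) / ln 2 - c * s / ((q + s) * ln 2)) (at 0)"
        unfolding F_def using q s
        by (auto intro!: derivative_eq_intros)
      moreover have "(c * (ln q - ln (q + s)) + (c / q - c / (q + s)) * q) / ln 2 - c * s / ((q + s) * ln 2)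
           = c * log 2 (q / (q + s))"
      proof -
        have a: "(c / q - c / (q + s)) * q = c * s / (q + s)" proof -
          have "q * q + q * s > 0" using q s by (simp add: add_pos_pos)
          then show ?thesis using q s by (simp add: field_split_simps)
        qed
        have b: "c * s / ((q + s) * ln 2) = (c * s / (q + s)) / ln 2" by simp
        have l: "log 2 (q / (q + s)) = (ln q - ln (q + s)) / ln 2" using q s by (simp add: log_def ln_div)
        show ?thesis unfolding a b l by (simp add: add_divide_distrib)
      qed
      ultimately show ?thesis by simp
    qed
    then show ?thesis
    proof (rule has_field_derivative_transform_within[OF _ d])
      show "(0::real) \<in> UNIV" by simp
    next
      fix e :: real assume "e \<in> UNIV" "dist e 0 < d"
      then have u: "q + e * c > 0" using pos by blast
      then have "q + e * c + s > 0" using s by simp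
      then show "F e = G (q + e * c) s" using u s by (simp add: G_def ent_def F_def log_def ln_div)
    qed
  qed
qed

definition M :: "('x::finite,'y::finite) jdist \<Rightarrow> bool \<Rightarrow> 'x \<Rightarrow> 'y \<Rightarrow> real" where
  "M Q t a b = log 2 (pr Q t a b / (pr Q t a b + pr Q (\<not> t) a b))"

lemma sum_delta2: "(\<Sum>b\<in>UNIV. ((if b = y then 1 else 0) - (if b = y' then 1 else 0)) * f b) = f y - f y'"
  for f :: "'a::finite \<Rightarrow> real"
proof -
  have e: "((if b = y then 1 else 0) - (if b = y' then 1 else 0)) * f b
      = (if b = y then f b else 0) - (if b = y' then f b else 0)" for b by simp
  show ?thesis by (simp only: e sum_subtractf) simp
qed

lemma key:
  fixes P :: "('x::finite,'y::finite) jdist"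
  assumes P: "is_dist P" "pT P False > 0" "pT P True > 0"
  and Q: "Q \<in> rel_interior (DeltaP P)" "Q \<in> argmaxH P"
  and xs: "x \<in> Xsupp P t" "x' \<in> Xsupp P t" "x \<noteq> x'"
  and ys: "y \<in> Ysupp P t" "y' \<in> Ysupp P t" "y \<noteq> y'"
  shows "M Q t x y + M Q t x' y' = M Q t x y' + M Q t x' y"
proof -
  have QD: "Q \<in> DeltaP P" using Q(1) rel_interior_subset by blast
  have dQ: "is_dist Q" using QD by (simp add: DeltaP_def)
  have pos: "pr Q t a b > 0" if "a \<in> Xsupp P t" "b \<in> Ysupp P t" for a b
    using relint_pos[OF P Q(1) that] .
  define u where "u a = (if a = x then 1 else 0) - (if a = x' then (1::real) else 0)" for a
  define v where "v b = (if b = y then 1 else 0) - (if b = y' then (1::real) else 0)" for b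
  define D :: "('x,'y) jdist" where "D = (\<chi> i. case i of (t',a,b) \<Rightarrow> if t' = t then u a * v b else 0)"
  have prD: "pr D t' a b = (if t' = t then u a * v b else 0)" for t' a b by (simp add: D_def)
  have sv: "(\<Sum>b\<in>UNIV. v b) = 0" by (simp add: v_def sum_subtractf)
  have su: "(\<Sum>a\<in>UNIV. u a) = 0" by (simp add: u_def sum_subtractf)
  have DX: "pTX D t' a = 0" for t' a
    by (cases "t' = t") (simp_all add: pTX_def prD sv flip: sum_distrib_left)
  have DY: "pTY D t' b = 0" for t' b
    by (cases "t' = t") (simp_all add: pTY_def prD su flip: sum_distrib_right)
  define \<delta> where "\<delta> = min (min (pr Q t x y) (pr Q t x y')) (min (pr Q t x' y) (pr Q t x' y'))"
  have \<delta>: "\<delta> > 0" using pos xs ys by (simp add: \<delta>_def)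
  have uvb: "\<bar>u a * v b\<bar> \<le> 1" for a b
    using xs(3) ys(3) by (auto simp: u_def v_def abs_mult)
  have nz: "pr Q t a b \<ge> \<delta>" if "u a * v b \<noteq> 0" for a b
  proof -
    have "a = x \<or> a = x'" "b = y \<or> b = y'" using that by (auto simp: u_def v_def split: if_splits)
    then show ?thesis by (auto simp: \<delta>_def)
  qed
  have mem: "Q + e *\<^sub>R D \<in> DeltaP P" if e: "\<bar>e\<bar> < \<delta>" for e
  proof -
    have nn: "0 \<le> pr Q t' a b + e * pr D t' a b" for t' a b
    proof (cases "t' = t \<and> u a * v b \<noteq> 0")
      case True
      then have "pr Q t a b \<ge> \<delta>" using nz by blast
      moreover have "\<bar>e * (u a * v b)\<bar> \<le> \<bar>e\<bar>"
        using uvb[of a b] by (simp add: abs_mult mult_left_le)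
      ultimately show ?thesis using True e by (simp add: prD)
    next
      case False
      then show ?thesis using dQ by (auto simp: prD is_dist_def)
    qed
    show ?thesis
      using nn dQ QD by (simp add: DeltaP_def is_dist_alt DX DY)
  qed
  define h where "h e = condH (Q + e *\<^sub>R D)" for e
  have le: "\<forall>e. \<bar>0 - e\<bar> < \<delta> \<longrightarrow> h e \<le> h 0"
    using mem Q(2) by (auto simp: h_def argmaxH_def)
  have hform: "h = (\<lambda>e. - (\<Sum>a\<in>UNIV. \<Sum>b\<in>UNIV. G (pr Q t a b + e * (u a * v b)) (pr Q (\<not> t) a b)))"
    by (rule ext) (simp add: h_def condH_alt[where t=t] prD)
  have dcell: "((\<lambda>e. G (pr Q t a b + e * (u a * v b)) (pr Q (\<not> t) a b)) has_real_derivative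
      (u a * v b) * M Q t a b) (at 0)" for a b
    unfolding M_def
  proof (rule G_deriv)
    show "u a * v b = 0 \<or> 0 < pr Q t a b" by (cases "u a * v b = 0") (auto intro: less_le_trans[OF \<delta> nz])
    show "0 \<le> pr Q (\<not> t) a b" using dQ by (simp add: is_dist_def)
  qed
  have "(h has_real_derivative - (\<Sum>a\<in>UNIV. \<Sum>b\<in>UNIV. (u a * v b) * M Q t a b)) (at 0)"
    unfolding hform by (intro DERIV_minus DERIV_sum dcell)
  from DERIV_local_max[OF this \<delta> le]
  have "(\<Sum>a\<in>UNIV. \<Sum>b\<in>UNIV. (u a * v b) * M Q t a b) = 0" by simp
  moreover have "(\<Sum>a\<in>UNIV. \<Sum>b\<in>UNIV. (u a * v b) * M Q t a b)
      = (M Q t x y - M Q t x y') - (M Q t x' y - M Q t x' y')"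
  proof -
    have "(\<Sum>a\<in>UNIV. \<Sum>b\<in>UNIV. (u a * v b) * M Q t a b)
        = (\<Sum>a\<in>UNIV. u a * (M Q t a y - M Q t a y'))"
      by (simp add: mult.assoc sum_distrib_left[symmetric] v_def sum_delta2)
    also have "\<dots> = (M Q t x y - M Q t x y') - (M Q t x' y - M Q t x' y')"
      unfolding u_def by (rule sum_delta2)
    finally show ?thesis .
  qed
  ultimately show ?thesis by linarith
qed


lemma pXY_bool: "pXY Q a b = pr Q t a b + pr Q (\<not> t) a b"
  by (simp add: pXY_def sum_bool[where b=t])

lemma M0: "pr Q (\<not> t) a b = 0 \<Longrightarrow> M Q t a b = 0"
  by (cases "pr Q t a b = 0") (simp_all add: M_def log_def)

lemma M_eq:
  assumes "pr Q t a b > 0" "pr Q t a' b' > 0" "pr Q (\<not> t) a b \<ge> 0" "pr Q (\<not> t) a' b' \<ge> 0"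
    "M Q t a b = M Q t a' b'"
  shows "pr Q t a b * pXY Q a' b' = pr Q t a' b' * pXY Q a b"
proof -
  define q where "q = pr Q t a b"
  define s where "s = pr Q (\<not> t) a b"
  define q' where "q' = pr Q t a' b'"
  define s' where "s' = pr Q (\<not> t) a' b'"
  have q: "q > 0" "q' > 0" "s \<ge> 0" "s' \<ge> 0" using assms by (simp_all add: q_def s_def q'_def s'_def)
  have l: "log 2 (q / (q + s)) = log 2 (q' / (q' + s'))"
    using assms(5) by (simp add: M_def q_def s_def q'_def s'_def)
  have "q / (q + s) = q' / (q' + s')"
  proof -
    have "q / (q + s) = 2 powr (log 2 (q / (q + s)))" using q by simp
    also have "\<dots> = 2 powr (log 2 (q' / (q' + s')))" using l by simp
    also have "\<dots> = q' / (q' + s')" using q by simp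
    finally show ?thesis .
  qed
  then have "q * (q' + s') = q' * (q + s)" using q by (simp add: frac_eq_eq)
  then show ?thesis by (simp add: pXY_bool[where t=t] q_def s_def q'_def s'_def)
qed

lemma cross:
  assumes "pr Q t a b * pXY Q a' b' = pr Q t a' b' * pXY Q a b"
  shows "pr Q t' a b * pXY Q a' b' = pr Q t' a' b' * pXY Q a b"
proof (cases "t' = t")
  case True then show ?thesis using assms by simp
next
  case False
  then have t': "t' = (\<not> t)" by auto
  have e: "pr Q (\<not> t) a b = pXY Q a b - pr Q t a b" "pr Q (\<not> t) a' b' = pXY Q a' b' - pr Q t a' b'"
    by (simp_all add: pXY_bool[where t=t])
  show ?thesis unfolding t' e using assms by algebra
qed

lemma pX_alt: "pX Q a = (\<Sum>y\<in>UNIV. pXY Q a y)"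
  unfolding pX_def pXY_def by (rule sum.swap)
lemma pY_alt: "pY Q b = (\<Sum>x\<in>UNIV. pXY Q x b)"
  unfolding pY_def pXY_def by (rule sum.swap)

lemma prCY: "pr (cond_Y Q B) t a b = (if b \<in> B then pr Q t a b else 0) / (\<Sum>y'\<in>B. pY Q y')"
  unfolding cond_Y_def by (simp only: pr_chi prod.case)
lemma prCX: "pr (cond_X Q A) t a b = (if a \<in> A then pr Q t a b else 0) / (\<Sum>x'\<in>A. pX Q x')"
  unfolding cond_X_def by (simp only: pr_chi prod.case)
lemma sum_if_UNIV: "(\<Sum>y\<in>UNIV. (if y \<in> B then f y else 0)) = sum f B" for f :: "'a::finite \<Rightarrow> real"
  by (simp add: sum.If_cases)

lemma condY_indep:
  assumes "\<And>t' a b b'. b \<in> B \<Longrightarrow> b' \<in> B \<Longrightarrow> pr Q t' a b * pXY Q a b' = pr Q t' a b' * pXY Q a b"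
  shows "indep_TY_given_X (cond_Y Q B)"
  unfolding indep_TY_given_X_def
proof (intro allI)
  fix t a b
  let ?c = "\<Sum>y'\<in>B. pY Q y'"
  have pTXC: "pTX (cond_Y Q B) t a = (\<Sum>y\<in>B. pr Q t a y) / ?c"
    by (simp only: pTX_def prCY sum_divide_distrib[symmetric] sum_if_UNIV)
  have pXYC: "pXY (cond_Y Q B) a y = (if y \<in> B then pXY Q a y else 0) / ?c" for y
    by (cases "y \<in> B") (simp_all add: pXY_def prCY sum_divide_distrib)
  have pXC: "pX (cond_Y Q B) a = (\<Sum>y\<in>B. pXY Q a y) / ?c"
    by (simp only: pX_alt pXYC sum_divide_distrib[symmetric] sum_if_UNIV)
  show "pr (cond_Y Q B) t a b * pX (cond_Y Q B) a = pTX (cond_Y Q B) t a * pXY (cond_Y Q B) a b"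
  proof (cases "b \<in> B")
    case False then show ?thesis by (simp add: prCY pXYC)
  next
    case True
    have "pr Q t a b * (\<Sum>y\<in>B. pXY Q a y) = (\<Sum>y\<in>B. pr Q t a b * pXY Q a y)"
      by (simp add: sum_distrib_left)
    also have "\<dots> = (\<Sum>y\<in>B. pr Q t a y * pXY Q a b)"
    proof (rule sum.cong[OF refl])
      fix z assume "z \<in> B"
      then show "pr Q t a b * pXY Q a z = pr Q t a z * pXY Q a b" by (rule assms[OF True])
    qed
    also have "\<dots> = (\<Sum>y\<in>B. pr Q t a y) * pXY Q a b"
      by (simp add: sum_distrib_right)
    finally have eq: "pr Q t a b * (\<Sum>y\<in>B. pXY Q a y) = (\<Sum>y\<in>B. pr Q t a y) * pXY Q a b" .
    show ?thesis
      by (simp only: prCY pXC pTXC pXYC if_P[OF True] times_divide_times_eq eq)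
  qed
qed

lemma condX_indep:
  assumes "\<And>t' a a' b. a \<in> A \<Longrightarrow> a' \<in> A \<Longrightarrow> pr Q t' a b * pXY Q a' b = pr Q t' a' b * pXY Q a b"
  shows "indep_TX_given_Y (cond_X Q A)"
  unfolding indep_TX_given_Y_def
proof (intro allI)
  fix t a b
  let ?c = "\<Sum>x'\<in>A. pX Q x'"
  have pTYC: "pTY (cond_X Q A) t b = (\<Sum>x\<in>A. pr Q t x b) / ?c"
    by (simp only: pTY_def prCX sum_divide_distrib[symmetric] sum_if_UNIV)
  have pXYC: "pXY (cond_X Q A) x b = (if x \<in> A then pXY Q x b else 0) / ?c" for x
    by (cases "x \<in> A") (simp_all add: pXY_def prCX sum_divide_distrib)
  have pYC: "pY (cond_X Q A) b = (\<Sum>x\<in>A. pXY Q x b) / ?c"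
    by (simp only: pY_alt pXYC sum_divide_distrib[symmetric] sum_if_UNIV)
  show "pr (cond_X Q A) t a b * pY (cond_X Q A) b = pTY (cond_X Q A) t b * pXY (cond_X Q A) a b"
  proof (cases "a \<in> A")
    case False then show ?thesis by (simp add: prCX pXYC)
  next
    case True
    have "pr Q t a b * (\<Sum>x\<in>A. pXY Q x b) = (\<Sum>x\<in>A. pr Q t a b * pXY Q x b)"
      by (simp add: sum_distrib_left)
    also have "\<dots> = (\<Sum>x\<in>A. pr Q t x b * pXY Q a b)"
    proof (rule sum.cong[OF refl])
      fix z assume "z \<in> A"
      then show "pr Q t a b * pXY Q z b = pr Q t z b * pXY Q a b" by (rule assms[OF True])
    qed
    also have "\<dots> = (\<Sum>x\<in>A. pr Q t x b) * pXY Q a b"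
      by (simp add: sum_distrib_right)
    finally have eq: "pr Q t a b * (\<Sum>x\<in>A. pXY Q x b) = (\<Sum>x\<in>A. pr Q t x b) * pXY Q a b" .
    show ?thesis
      by (simp only: prCX pYC pTYC pXYC if_P[OF True] times_divide_times_eq eq)
  qed
qed

theorem mainTheorem14:
  fixes P :: "('x::finite, 'y::finite) jdist"
  assumes "is_dist P" and "pT P False > 0" and "pT P True > 0"
  shows
   "(Xsupp P False \<inter> Xsupp P True = {} \<longrightarrow> (\<forall>Q\<in>DeltaP P. indep_TY_given_X Q))
  \<and> (Ysupp P False \<inter> Ysupp P True = {} \<longrightarrow> (\<forall>Q\<in>DeltaP P. indep_TX_given_Y Q))
  \<and> (Xsupp P False \<inter> Xsupp P True \<noteq> {} \<and> Ysupp P False \<inter> Ysupp P True \<noteq> {} \<longrightarrow>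
       ((\<exists>t. Xsupp P t - Xsupp P (\<not> t) \<noteq> {} \<and> Ysupp P t - Ysupp P (\<not> t) \<noteq> {}) \<longrightarrow>
            argmaxH P \<inter> rel_interior (DeltaP P) = {})
     \<and> (\<forall>t. Xsupp P t - Xsupp P (\<not> t) \<noteq> {} \<longrightarrow>
            (\<forall>Q\<in>rel_interior (DeltaP P) \<inter> argmaxH P. indep_TY_given_X (cond_Y Q (Ysupp P t))))
     \<and> (\<forall>t. Ysupp P t - Ysupp P (\<not> t) \<noteq> {} \<longrightarrow>
            (\<forall>Q\<in>rel_interior (DeltaP P) \<inter> argmaxH P. indep_TX_given_Y (cond_X Q (Xsupp P t)))))"
proof -
  note P = assms
  have pt: "pT P t > 0" for t using assms by (cases t) auto
  have zX: "pr Q s a b = 0" if "Q \<in> DeltaP P" "a \<notin> Xsupp P s" for Q s a b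
    using zero_cell[OF that(1) notX_zero[OF assms(1) pt that(2)]] .
  have zY: "pr Q s a b = 0" if "Q \<in> DeltaP P" "b \<notin> Ysupp P s" for Q s a b
    using zero_cell_Y[OF that(1) notY_zero[OF assms(1) pt that(2)]] .
  have nn: "pr Q s a b \<ge> 0" if "Q \<in> DeltaP P" for Q s a b
    using that by (simp add: DeltaP_def is_dist_def)
  have part1: "indep_TY_given_X Q" if disj: "Xsupp P False \<inter> Xsupp P True = {}" and QD: "Q \<in> DeltaP P" for Q
    unfolding indep_TY_given_X_def
  proof (intro allI)
    fix t' a b
    obtain s where s: "a \<notin> Xsupp P s" using disj by blast
    have z: "pr Q s a c = 0" for c using zX[OF QD s] .
    have pX: "pX Q a = pTX Q (\<not> s) a"
      by (simp add: pX_def pTX_def sum_bool[where b="\<not> s"] z)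
    have pXY: "pXY Q a b = pr Q (\<not> s) a b" by (simp add: pXY_bool[where t="\<not> s"] z)
    have pTXs: "pTX Q s a = 0" by (simp add: pTX_def z)
    show "pr Q t' a b * pX Q a = pTX Q t' a * pXY Q a b"
      by (cases "t' = s") (auto simp: z pTXs pX pXY)
  qed
  have part2: "indep_TX_given_Y Q" if disj: "Ysupp P False \<inter> Ysupp P True = {}" and QD: "Q \<in> DeltaP P" for Q
    unfolding indep_TX_given_Y_def
  proof (intro allI)
    fix t' a b
    obtain s where s: "b \<notin> Ysupp P s" using disj by blast
    have z: "pr Q s c b = 0" for c using zY[OF QD s] .
    have pY: "pY Q b = pTY Q (\<not> s) b"
      by (simp add: pY_def pTY_def sum_bool[where b="\<not> s"] z)
    have pXY: "pXY Q a b = pr Q (\<not> s) a b" by (simp add: pXY_bool[where t="\<not> s"] z)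
    have pTYs: "pTY Q s b = 0" by (simp add: pTY_def z)
    show "pr Q t' a b * pY Q b = pTY Q t' b * pXY Q a b"
      by (cases "t' = s") (auto simp: z pTYs pY pXY)
  qed
  have part3: "((\<exists>t. Xsupp P t - Xsupp P (\<not> t) \<noteq> {} \<and> Ysupp P t - Ysupp P (\<not> t) \<noteq> {}) \<longrightarrow>
            argmaxH P \<inter> rel_interior (DeltaP P) = {})
     \<and> (\<forall>t. Xsupp P t - Xsupp P (\<not> t) \<noteq> {} \<longrightarrow>
            (\<forall>Q\<in>rel_interior (DeltaP P) \<inter> argmaxH P. indep_TY_given_X (cond_Y Q (Ysupp P t))))
     \<and> (\<forall>t. Ysupp P t - Ysupp P (\<not> t) \<noteq> {} \<longrightarrow>
            (\<forall>Q\<in>rel_interior (DeltaP P) \<inter> argmaxH P. indep_TX_given_Y (cond_X Q (Xsupp P t))))"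
    if ne: "Xsupp P False \<inter> Xsupp P True \<noteq> {}" "Ysupp P False \<inter> Ysupp P True \<noteq> {}"
  proof (intro conjI impI allI ballI)
    obtain x1 where x1: "x1 \<in> Xsupp P False" "x1 \<in> Xsupp P True" using ne(1) by blast
    obtain y1 where y1: "y1 \<in> Ysupp P False" "y1 \<in> Ysupp P True" using ne(2) by blast
    have x1t: "x1 \<in> Xsupp P t" for t using x1 by (cases t) auto
    have y1t: "y1 \<in> Ysupp P t" for t using y1 by (cases t) auto
    assume "\<exists>t. Xsupp P t - Xsupp P (\<not> t) \<noteq> {} \<and> Ysupp P t - Ysupp P (\<not> t) \<noteq> {}"
    then obtain t x0 y0 where x0: "x0 \<in> Xsupp P t" "x0 \<notin> Xsupp P (\<not> t)"
      and y0: "y0 \<in> Ysupp P t" "y0 \<notin> Ysupp P (\<not> t)" by blast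
    show "argmaxH P \<inter> rel_interior (DeltaP P) = {}"
    proof (rule ccontr)
      assume "argmaxH P \<inter> rel_interior (DeltaP P) \<noteq> {}"
      then obtain Q where Q: "Q \<in> rel_interior (DeltaP P)" "Q \<in> argmaxH P" by blast
      have QD: "Q \<in> DeltaP P" using Q(1) rel_interior_subset by blast
      have neq: "x1 \<noteq> x0" "y1 \<noteq> y0" using x0 y0 x1t y1t by auto
      have k: "M Q t x1 y1 + M Q t x0 y0 = M Q t x1 y0 + M Q t x0 y1"
        using key[OF P Q x1t x0(1) neq(1) y1t y0(1) neq(2)] .
      have m1: "M Q t x0 y0 = 0" "M Q t x0 y1 = 0" "M Q t x1 y0 = 0"
        by (rule M0, rule zX[OF QD x0(2)])+ (rule M0, rule zY[OF QD y0(2)])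
      have q: "pr Q t x1 y1 > 0" "pr Q (\<not> t) x1 y1 > 0"
        using relint_pos[OF P Q(1)] x1t y1t by auto
      have "M Q t x1 y1 < 0"
      proof -
        have "pr Q t x1 y1 / (pr Q t x1 y1 + pr Q (\<not> t) x1 y1) < 1" using q by simp
        then have "log 2 (pr Q t x1 y1 / (pr Q t x1 y1 + pr Q (\<not> t) x1 y1)) < log 2 1"
          using q by (subst log_less_cancel_iff) auto
        then show ?thesis by (simp add: M_def)
      qed
      then show False using k m1 by simp
    qed
  next
    fix t Q
    assume x0e: "Xsupp P t - Xsupp P (\<not> t) \<noteq> {}" and Q': "Q \<in> rel_interior (DeltaP P) \<inter> argmaxH P"
    then obtain x0 where x0: "x0 \<in> Xsupp P t" "x0 \<notin> Xsupp P (\<not> t)" by blast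
    have Q: "Q \<in> rel_interior (DeltaP P)" "Q \<in> argmaxH P" using Q' by auto
    have QD: "Q \<in> DeltaP P" using Q(1) rel_interior_subset by blast
    have T: "pr Q t a b * pXY Q a b' = pr Q t a b' * pXY Q a b"
      if b: "b \<in> Ysupp P t" "b' \<in> Ysupp P t" for a b b'
    proof (cases "a \<in> Xsupp P t")
      case False then show ?thesis using zX[OF QD False] by simp
    next
      case a: True
      show ?thesis
      proof (cases "a = x0 \<or> b = b'")
        case True
        then show ?thesis
        proof
          assume "a = x0"
          then show ?thesis using zX[OF QD x0(2)] by (simp add: pXY_bool[where t=t])
        qed simp
      next
        case False
        have k: "M Q t a b + M Q t x0 b' = M Q t a b' + M Q t x0 b"
          using key[OF P Q a x0(1) _ b(1) b(2)] False by blast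
        have "M Q t x0 b' = 0" "M Q t x0 b = 0" by (rule M0, rule zX[OF QD x0(2)])+
        then have "M Q t a b = M Q t a b'" using k by simp
        then show ?thesis
          by (rule M_eq[OF relint_pos[OF P Q(1) a b(1)] relint_pos[OF P Q(1) a b(2)] nn[OF QD] nn[OF QD]])
      qed
    qed
    show "indep_TY_given_X (cond_Y Q (Ysupp P t))"
      by (rule condY_indep) (rule cross, rule T)
  next
    fix t Q
    assume y0e: "Ysupp P t - Ysupp P (\<not> t) \<noteq> {}" and Q': "Q \<in> rel_interior (DeltaP P) \<inter> argmaxH P"
    then obtain y0 where y0: "y0 \<in> Ysupp P t" "y0 \<notin> Ysupp P (\<not> t)" by blast
    have Q: "Q \<in> rel_interior (DeltaP P)" "Q \<in> argmaxH P" using Q' by auto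
    have QD: "Q \<in> DeltaP P" using Q(1) rel_interior_subset by blast
    have T: "pr Q t a b * pXY Q a' b = pr Q t a' b * pXY Q a b"
      if a: "a \<in> Xsupp P t" "a' \<in> Xsupp P t" for a a' b
    proof (cases "b \<in> Ysupp P t")
      case False then show ?thesis using zY[OF QD False] by simp
    next
      case b: True
      show ?thesis
      proof (cases "b = y0 \<or> a = a'")
        case True
        then show ?thesis
        proof
          assume "b = y0"
          then show ?thesis using zY[OF QD y0(2)] by (simp add: pXY_bool[where t=t])
        qed simp
      next
        case False
        have k: "M Q t a b + M Q t a' y0 = M Q t a y0 + M Q t a' b"
          using key[OF P Q a(1) a(2) _ b y0(1)] False by blast
        have "M Q t a' y0 = 0" "M Q t a y0 = 0" by (rule M0, rule zY[OF QD y0(2)])+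
        then have "M Q t a b = M Q t a' b" using k by simp
        then show ?thesis
          by (rule M_eq[OF relint_pos[OF P Q(1) a(1) b] relint_pos[OF P Q(1) a(2) b] nn[OF QD] nn[OF QD]])
      qed
    qed
    show "indep_TX_given_Y (cond_X Q (Xsupp P t))"
      by (rule condX_indep) (rule cross, rule T)
  qed
  show ?thesis using part1 part2 part3 by blast
qed




end
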